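(* Let $n>1$ be an integer, let $m=\prod_{p\mid n,\ p \text{ prime}} p$ be the square-free part (radical) of $n$, and let $0<a_1<a_2<\cdots<a_{\phi(n)}<n$ be the positive integers less than $n$ and coprime with $n$, listed in increasing order. Then $$\sum_{j=1}^{\phi(n)} j\,a_j=\frac{\phi(n)}{24}\left(8n\phi(n)+6n+2\phi(m)(-1)^{\omega(m)}-2^{\omega(m)}\right).$$
   Context: $\phi$ denotes Euler's totient function and $\omega(k)$ denotes the number of distinct prime factors of $k$. *)

theory Defs
  imports "HOL-Number_Theory.Number_Theory"
begin

definition radical :: "nat \<Rightarrow> nat" where
  "radical n = (\<Prod>p\<in>prime_factors n. p)"

definition omega :: "nat \<Rightarrow> nat" where
  "omega k = card (prime_factors k)"

definition totatives_sorted :: "nat \<Rightarrow> nat list" where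
  "totatives_sorted n = sorted_list_of_set {a. 0 < a \<and> a < n \<and> coprime a n}"

end

theory Submission
  imports Defs
begin

lemma sum_Pow_insert:
  assumes "finite F" "x \<notin> F"
  shows "(\<Sum>S\<in>Pow (insert x F). h S) = (\<Sum>S\<in>Pow F. h S) + (\<Sum>S\<in>Pow F. h (insert x S))"
proof -
  have d: "Pow F \<inter> insert x ` Pow F = {}" using assms by auto
  have i: "inj_on (insert x) (Pow F)" unfolding inj_on_def using assms by (metis PowD insert_ident subsetD)
  show ?thesis unfolding Pow_insert
    using assms d i by (simp add: sum.union_disjoint sum.reindex)
qed

lemma pow_pair_prod:
  fixes a b c :: "nat \<Rightarrow> real"
  assumes "finite P"
  shows "(\<Sum>S\<in>Pow P. \<Sum>T\<in>Pow P. (\<Prod>p\<in>S. a p) * (\<Prod>p\<in>T. b p) * (\<Prod>p\<in>S\<inter>T. c p))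
       = (\<Prod>p\<in>P. 1 + a p + b p + a p * b p * c p)"
  using assms
proof (induction P rule: finite_induct)
  case empty
  then show ?case by simp
next
  case (insert x F)
  define t where "t S T = (\<Prod>p\<in>S. a p) * (\<Prod>p\<in>T. b p) * (\<Prod>p\<in>S\<inter>T. c p)" for S T
  have fin: "\<And>S. S \<in> Pow F \<Longrightarrow> finite S" using insert.hyps(1) finite_subset by auto
  have nx: "\<And>S. S \<in> Pow F \<Longrightarrow> x \<notin> S" using insert.hyps(2) by auto
  have e1: "t (insert x S) T = a x * t S T" if "S \<in> Pow F" "T \<in> Pow F" for S T
  proof -
    have "insert x S \<inter> T = S \<inter> T" using nx[OF that(2)] by auto
    thus ?thesis unfolding t_def using fin[OF that(1)] nx[OF that(1)] by simp
  qed
  have e2: "t S (insert x T) = b x * t S T" if "S \<in> Pow F" "T \<in> Pow F" for S T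
  proof -
    have "S \<inter> insert x T = S \<inter> T" using nx[OF that(1)] by auto
    thus ?thesis unfolding t_def using fin[OF that(2)] nx[OF that(2)] by simp
  qed
  have e3: "t (insert x S) (insert x T) = a x * b x * c x * t S T" if "S \<in> Pow F" "T \<in> Pow F" for S T
  proof -
    have "insert x S \<inter> insert x T = insert x (S \<inter> T)" by auto
    moreover have "finite (S \<inter> T)" "x \<notin> S \<inter> T" using fin[OF that(1)] nx[OF that(1)] by auto
    ultimately show ?thesis unfolding t_def using fin[OF that(1)] nx[OF that(1)] fin[OF that(2)] nx[OF that(2)] by simp
  qed
  have "(\<Sum>S\<in>Pow (insert x F). \<Sum>T\<in>Pow (insert x F). t S T)
      = (\<Sum>S\<in>Pow F. \<Sum>T\<in>Pow F. t S T + t S (insert x T) + t (insert x S) T + t (insert x S) (insert x T))"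
    using insert.hyps by (simp add: sum_Pow_insert sum.distrib add.assoc)
  also have "\<dots> = (\<Sum>S\<in>Pow F. \<Sum>T\<in>Pow F. (1 + a x + b x + a x * b x * c x) * t S T)"
    by (intro sum.cong refl) (simp add: e1 e2 e3 algebra_simps)
  also have "\<dots> = (1 + a x + b x + a x * b x * c x) * (\<Sum>S\<in>Pow F. \<Sum>T\<in>Pow F. t S T)"
    by (simp add: sum_distrib_left)
  finally show ?case using insert unfolding t_def by simp
qed



lemma cnt_incl_excl:
  assumes "finite A" "\<forall>p\<in>A. prime (p::nat)"
  shows "int (card {b\<in>{1..c}. \<forall>p\<in>A. \<not> p dvd b}) = (\<Sum>S\<in>Pow A. (-1)^card S * int (c div \<Prod>S))"
  using assms
proof (induction A arbitrary: c rule: finite_induct)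
  case empty
  have "{b\<in>{1..c}. \<forall>p\<in>{}. \<not> p dvd b} = {1..c}" by auto
  then show ?case by simp
next
  case (insert p F)
  have pp: "prime p" and pF: "\<forall>q\<in>F. prime q" using insert.prems by auto
  hence p0: "p > 0" by (simp add: prime_gt_0_nat)
  define X where "X = {b\<in>{1..c}. \<forall>q\<in>F. \<not> q dvd b}"
  define Y where "Y = {b\<in>X. p dvd b}"
  have eq: "{b\<in>{1..c}. \<forall>q\<in>insert p F. \<not> q dvd b} = X - Y" unfolding X_def Y_def by auto
  have fX: "finite X" unfolding X_def by simp
  have YX: "Y \<subseteq> X" unfolding Y_def by auto
  have Yim: "Y = (\<lambda>b. p * b) ` {b\<in>{1..c div p}. \<forall>q\<in>F. \<not> q dvd b}"
  proof (intro equalityI subsetI)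
    fix y assume "y \<in> Y"
    then obtain b where yb: "y = p * b" and y: "y \<in> X" unfolding Y_def by auto
    have "b \<ge> 1" using y yb unfolding X_def by (cases b) auto
    moreover have "b \<le> c div p" using y yb p0 unfolding X_def
      by (simp add: less_eq_div_iff_mult_less_eq mult.commute)
    moreover have "\<forall>q\<in>F. \<not> q dvd b" using y yb unfolding X_def by auto
    ultimately show "y \<in> (\<lambda>b. p * b) ` {b\<in>{1..c div p}. \<forall>q\<in>F. \<not> q dvd b}" using yb by auto
  next
    fix y assume "y \<in> (\<lambda>b. p * b) ` {b\<in>{1..c div p}. \<forall>q\<in>F. \<not> q dvd b}"
    then obtain b where yb: "y = p * b" and b1: "b \<ge> 1" "b \<le> c div p" and bF: "\<forall>q\<in>F. \<not> q dvd b" by auto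
    have "p * b \<le> c" using b1 p0 by (simp add: less_eq_div_iff_mult_less_eq mult.commute)
    moreover have "p * b \<ge> 1" using b1 p0 by simp
    moreover have "\<not> q dvd p * b" if "q \<in> F" for q
    proof
      assume "q dvd p * b"
      moreover have "prime q" using pF that by auto
      ultimately have "q dvd p \<or> q dvd b" using prime_dvd_mult_iff by blast
      moreover have "q \<noteq> p" using that insert.hyps by auto
      ultimately show False using bF that \<open>prime q\<close> pp primes_dvd_imp_eq by blast
    qed
    ultimately show "y \<in> Y" unfolding Y_def X_def using yb by auto
  qed
  have "card Y = card {b\<in>{1..c div p}. \<forall>q\<in>F. \<not> q dvd b}"
    unfolding Yim using p0 by (intro card_image) (auto simp: inj_on_def)
  hence cY: "int (card Y) = (\<Sum>S\<in>Pow F. (-1)^card S * int (c div p div \<Prod>S))"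
    using insert.IH[OF pF] by simp
  have cX: "int (card X) = (\<Sum>S\<in>Pow F. (-1)^card S * int (c div \<Prod>S))"
    unfolding X_def using insert.IH[OF pF] by simp
  have "int (card (X - Y)) = int (card X) - int (card Y)"
    using fX YX by (simp add: card_Diff_subset finite_subset card_mono of_nat_diff)
  also have "\<dots> = (\<Sum>S\<in>Pow (insert p F). (-1)^card S * int (c div \<Prod>S))"
  proof -
    have "(\<Sum>S\<in>Pow F. (-1)^card (insert p S) * int (c div \<Prod>(insert p S)))
        = (\<Sum>S\<in>Pow F. - ((-1)^card S * int (c div p div \<Prod>S)))"
    proof (intro sum.cong refl)
      fix S assume S: "S \<in> Pow F"
      hence fS: "finite S" and nS: "p \<notin> S" using insert.hyps finite_subset by auto
      thus "(-1)^card (insert p S) * int (c div \<Prod>(insert p S)) = - ((-1)^card S * int (c div p div \<Prod>S))"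
        by (simp add: div_mult2_eq)
    qed
    thus ?thesis using insert.hyps cX cY by (simp add: sum_Pow_insert sum_negf)
  qed
  finally show ?case using eq by simp
qed



lemma sum_blocks:
  fixes d K :: nat
  shows "(\<Sum>c<d*K. f c :: 'a::comm_monoid_add) = (\<Sum>t<K. \<Sum>r<d. f (d*t + r))"
proof (induction K)
  case 0 then show ?case by simp
next
  case (Suc K)
  have "(\<Sum>c<d*Suc K. f c) = (\<Sum>c<d*K. f c) + (\<Sum>c\<in>{d*K..<d*K+d}. f c)"
    by (simp add: lessThan_atLeast0 sum.atLeastLessThan_concat add.commute)
  also have "(\<Sum>c\<in>{d*K..<d*K+d}. f c) = (\<Sum>r<d. f (d*K + r))"
  proof -
    have "(\<Sum>c\<in>{0+d*K..<d+d*K}. f c) = (\<Sum>r\<in>{0..<d}. f (r + d*K))" by (rule sum.shift_bounds_nat_ivl)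
    thus ?thesis by (simp add: lessThan_atLeast0 add.commute)
  qed
  finally show ?case using Suc by simp
qed

lemma sum_id_real: "(\<Sum>i<k. real i) = real k * (real k - 1) / 2"
  by (induction k) (auto simp: field_simps)

lemma sum_sq_real: "(\<Sum>i<k. real i ^ 2) = real k * (real k - 1) * (2 * real k - 1) / 6"
  by (induction k) (auto simp: field_simps power2_eq_square)

lemma sum_div_real:
  assumes "d > 0"
  shows "(\<Sum>c<d*K. real (c div d)) = real d * real K * (real K - 1) / 2"
proof -
  have "(\<Sum>c<d*K. real (c div d)) = (\<Sum>t<K. \<Sum>r<d. real ((d*t + r) div d))" by (rule sum_blocks)
  also have "\<dots> = (\<Sum>t<K. \<Sum>r<d. real t)"
    using assms by (intro sum.cong refl) simp
  also have "\<dots> = real d * (\<Sum>t<K. real t)" by (simp add: sum_distrib_left)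
  finally show ?thesis by (simp add: sum_id_real)
qed

lemma sum_c_mod_real:
  assumes "d > 0"
  shows "(\<Sum>c<d*K. real c * real (c mod d)) =
     real d * (real K * (real K - 1) / 2) * (real d * (real d - 1) / 2)
     + real K * (real d * (real d - 1) * (2 * real d - 1) / 6)"
proof -
  have "(\<Sum>c<d*K. real c * real (c mod d)) = (\<Sum>t<K. \<Sum>r<d. real (d*t + r) * real ((d*t + r) mod d))"
    by (rule sum_blocks)
  also have "\<dots> = (\<Sum>t<K. real d * real t * (\<Sum>r<d. real r) + (\<Sum>r<d. real r ^ 2))"
    using assms by (intro sum.cong refl) (simp add: sum_distrib_left sum.distrib algebra_simps power2_eq_square)
  also have "\<dots> = real d * (\<Sum>t<K. real t) * (\<Sum>r<d. real r) + real K * (\<Sum>r<d. real r ^ 2)"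
    by (simp add: sum.distrib sum_distrib_left sum_distrib_right mult.assoc sum.swap[of _ "{..<d}"])
  finally show ?thesis by (simp add: sum_id_real sum_sq_real)
qed

lemma crt_sum:
  assumes d0: "d > (0::nat)" and e0: "e > 0"
  defines "g \<equiv> gcd d e"
  shows "(\<Sum>c<lcm d e. real (c mod d) * real (c mod e)) =
    real (lcm d e) * (real d * real e / 4 - (real d + real e) / 4 + real g ^ 2 / 12 + 1 / 6)"
proof -
  have g0: "g > 0" using d0 unfolding g_def by simp
  obtain d' where d': "d = g * d'" unfolding g_def by (meson gcd_dvd1 dvdE)
  obtain e' where e': "e = g * e'" unfolding g_def by (meson gcd_dvd2 dvdE)
  have d'0: "d' > 0" using d0 d' by simp
  have e'0: "e' > 0" using e0 e' by simp
  have "d * e = g * lcm d e" unfolding g_def by (rule prod_gcd_lcm_nat)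
  hence L: "lcm d e = g * d' * e'" using d' e' g0 by (simp add: algebra_simps)
  have L': "real (lcm d e) = real g * real d' * real e'" using L by simp
  have gd: "g dvd d" "g dvd e" unfolding g_def by auto
  define h where "h c = (c mod g, (c mod d) div g, (c mod e) div g)" for c
  define B where "B = {..<g} \<times> ({..<d'} \<times> {..<e'})"
  have inj: "inj_on h {..<lcm d e}"
  proof (rule inj_onI)
    fix x y assume x: "x \<in> {..<lcm d e}" and y: "y \<in> {..<lcm d e}" and hxy: "h x = h y"
    have "x mod d = g * ((x mod d) div g) + (x mod d) mod g" by simp
    also have "(x mod d) mod g = x mod g" using gd by (simp add: mod_mod_cancel)
    finally have xd: "x mod d = g * ((x mod d) div g) + x mod g" .
    have "y mod d = g * ((y mod d) div g) + (y mod d) mod g" by simp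
    also have "(y mod d) mod g = y mod g" using gd by (simp add: mod_mod_cancel)
    finally have yd: "y mod d = g * ((y mod d) div g) + y mod g" .
    have "x mod e = g * ((x mod e) div g) + (x mod e) mod g" by simp
    also have "(x mod e) mod g = x mod g" using gd by (simp add: mod_mod_cancel)
    finally have xe: "x mod e = g * ((x mod e) div g) + x mod g" .
    have "y mod e = g * ((y mod e) div g) + (y mod e) mod g" by simp
    also have "(y mod e) mod g = y mod g" using gd by (simp add: mod_mod_cancel)
    finally have ye: "y mod e = g * ((y mod e) div g) + y mod g" .
    from hxy have "x mod d = y mod d" "x mod e = y mod e"
      unfolding h_def using xd yd xe ye by auto
    hence "[x = y] (mod d)" "[x = y] (mod e)" by (auto simp: cong_def)
    hence "[x = y] (mod lcm d e)" by (rule cong_cong_lcm_nat)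
    thus "x = y" using x y cong_less_modulus_unique_nat by auto
  qed
  have sub: "h ` {..<lcm d e} \<subseteq> B"
  proof
    fix z assume "z \<in> h ` {..<lcm d e}"
    then obtain c where z: "z = h c" by auto
    have "c mod g < g" using g0 by simp
    moreover have "(c mod d) div g < d'"
      using d0 d'0 g0 d' by (simp add: div_less_iff_less_mult mult.commute)
    moreover have "(c mod e) div g < e'"
      using e0 e'0 g0 e' by (simp add: div_less_iff_less_mult mult.commute)
    ultimately show "z \<in> B" unfolding z h_def B_def by auto
  qed
  have "card (h ` {..<lcm d e}) = card B"
    using inj L by (simp add: card_image B_def card_cartesian_product)
  hence im: "h ` {..<lcm d e} = B" using sub by (intro card_subset_eq) (auto simp: B_def)
  have bij: "bij_betw h {..<lcm d e} B" using inj im by (simp add: bij_betw_def)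
  define F where "F z = (case z of (u, i, j) \<Rightarrow> (real g * real i + real u) * (real g * real j + real u))" for z
  have val: "real (c mod d) * real (c mod e) = F (h c)" for c
  proof -
    have "c mod d = g * ((c mod d) div g) + (c mod d) mod g" by simp
    also have "(c mod d) mod g = c mod g" using gd by (simp add: mod_mod_cancel)
    finally have xd: "c mod d = g * ((c mod d) div g) + c mod g" .
    have "c mod e = g * ((c mod e) div g) + (c mod e) mod g" by simp
    also have "(c mod e) mod g = c mod g" using gd by (simp add: mod_mod_cancel)
    finally have xe: "c mod e = g * ((c mod e) div g) + c mod g" .
    show ?thesis unfolding F_def h_def
      by (subst xd, subst xe) simp
  qed
  have "(\<Sum>c<lcm d e. real (c mod d) * real (c mod e)) = (\<Sum>c<lcm d e. F (h c))"
    by (simp add: val)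
  also have "\<dots> = sum F B" by (rule sum.reindex_bij_betw[OF bij])
  also have "\<dots> = (\<Sum>u<g. \<Sum>i<d'. \<Sum>j<e'. (real g * real i + real u) * (real g * real j + real u))"
    unfolding B_def F_def by (simp add: sum.cartesian_product)
  also have "\<dots> = (\<Sum>u<g. (\<Sum>i<d'. real g * real i + real u) * (\<Sum>j<e'. real g * real j + real u))"
    by (simp add: sum_product)
  also have "\<dots> = (\<Sum>u<g. (real g * (real d' * (real d' - 1) / 2) + real d' * real u)
                         * (real g * (real e' * (real e' - 1) / 2) + real e' * real u))"
    by (simp add: sum.distrib sum_distrib_left[symmetric] sum_id_real)
  also have "\<dots> = (\<Sum>u<g. real g * (real d' * (real d' - 1) / 2) * (real g * (real e' * (real e' - 1) / 2))
       + (real g * (real d' * (real d' - 1) / 2) * real e' + real g * (real e' * (real e' - 1) / 2) * real d') * real u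
       + real d' * real e' * real u ^ 2)"
    by (intro sum.cong refl) (simp add: algebra_simps power2_eq_square)
  also have "\<dots> = real g * (real g * (real d' * (real d' - 1) / 2) * (real g * (real e' * (real e' - 1) / 2)))
       + (real g * (real d' * (real d' - 1) / 2) * real e' + real g * (real e' * (real e' - 1) / 2) * real d') * (\<Sum>u<g. real u)
       + real d' * real e' * (\<Sum>u<g. real u ^ 2)"
    by (simp add: sum.distrib sum_distrib_left)
  also have "\<dots> = real (lcm d e) * (real d * real e / 4 - (real d + real e) / 4 + real g ^ 2 / 12 + 1 / 6)"
    unfolding sum_id_real sum_sq_real L' by (simp add: d' e' field_simps power2_eq_square)
  finally show ?thesis .
qed



lemma sum_mod_mod_real:
  assumes d0: "d > (0::nat)" and e0: "e > 0" and dn: "d dvd n" and en: "e dvd n"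
  shows "(\<Sum>c<n. real (c mod d) * real (c mod e)) =
    real n * (real d * real e / 4 - (real d + real e) / 4 + real (gcd d e) ^ 2 / 12 + 1 / 6)"
proof -
  define L where "L = lcm d e"
  have "L dvd n" unfolding L_def using dn en by (rule lcm_least)
  then obtain K where n: "n = L * K" by (auto elim: dvdE)
  have dL: "d dvd L" "e dvd L" unfolding L_def by auto
  have "(\<Sum>c<n. real (c mod d) * real (c mod e)) = (\<Sum>t<K. \<Sum>r<L. real ((L*t + r) mod d) * real ((L*t + r) mod e))"
    unfolding n by (rule sum_blocks)
  also have "\<dots> = (\<Sum>t<K. \<Sum>r<L. real (r mod d) * real (r mod e))"
  proof (intro sum.cong refl)
    fix t r
    have "(L*t + r) mod d = r mod d" using dL(1) by (auto elim!: dvdE simp: mult.assoc)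
    moreover have "(L*t + r) mod e = r mod e" using dL(2) by (auto elim!: dvdE simp: mult.assoc)
    ultimately show "real ((L*t + r) mod d) * real ((L*t + r) mod e) = real (r mod d) * real (r mod e)" by simp
  qed
  also have "\<dots> = real K * (real L * (real d * real e / 4 - (real d + real e) / 4 + real (gcd d e) ^ 2 / 12 + 1 / 6))"
    using crt_sum[OF d0 e0] unfolding L_def by simp
  finally show ?thesis unfolding n by simp
qed

lemma sum_c_mod_real':
  assumes d0: "d > (0::nat)" and dn: "d dvd n"
  shows "(\<Sum>c<n. real c * real (c mod d)) = real n * (real d - 1) * (3 * real n + real d - 2) / 12"
proof -
  obtain K where n: "n = d * K" using dn by (auto elim: dvdE)
  show ?thesis unfolding n sum_c_mod_real[OF d0]
    by (simp add: field_simps power2_eq_square)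
qed

lemma G_formula:
  assumes d0: "d > (0::nat)" and e0: "e > 0" and dn: "d dvd n" and en: "e dvd n"
  shows "(\<Sum>c<n. real (c div d) * real (c div e)) =
    real n * (4 * real n ^ 2 - 3 * real n * (real d + real e) - real d ^ 2 - real e ^ 2
              + 3 * real d * real e + real (gcd d e) ^ 2) / (12 * real d * real e)"
proof -
  have dv: "real (c div d) = (real c - real (c mod d)) / real d" for c d :: nat
  proof (cases "d = 0")
    case False
    have "c = d * (c div d) + c mod d" by simp
    hence "real c = real d * real (c div d) + real (c mod d)" by (metis of_nat_add of_nat_mult)
    thus ?thesis using False by (simp add: field_simps)
  qed simp
  have "(\<Sum>c<n. real (c div d) * real (c div e)) =
        (\<Sum>c<n. real c ^ 2 - real c * real (c mod d) - real c * real (c mod e) + real (c mod d) * real (c mod e)) / (real d * real e)"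
    unfolding dv using d0 e0 by (simp add: sum_divide_distrib field_simps power2_eq_square)
  also have "\<dots> = ((\<Sum>c<n. real c ^ 2) - (\<Sum>c<n. real c * real (c mod d)) - (\<Sum>c<n. real c * real (c mod e))
        + (\<Sum>c<n. real (c mod d) * real (c mod e))) / (real d * real e)"
    by (simp add: sum.distrib sum_subtractf)
  also have "\<dots> = real n * (4 * real n ^ 2 - 3 * real n * (real d + real e) - real d ^ 2 - real e ^ 2
              + 3 * real d * real e + real (gcd d e) ^ 2) / (12 * real d * real e)"
    unfolding sum_sq_real sum_c_mod_real'[OF d0 dn] sum_c_mod_real'[OF e0 en] sum_mod_mod_real[OF d0 e0 dn en]
    using d0 e0 by (simp add: field_simps power2_eq_square)
  finally show ?thesis .
qed



lemma pow_pair_prod2: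
  fixes a b :: "nat \<Rightarrow> real"
  assumes "finite P"
  shows "(\<Sum>S\<in>Pow P. \<Sum>T\<in>Pow P. (\<Prod>p\<in>S. a p) * (\<Prod>p\<in>T. b p))
       = (\<Prod>p\<in>P. 1 + a p + b p + a p * b p)"
  using pow_pair_prod[OF assms, of a b "\<lambda>_. 1"] by simp

lemma pow_prod:
  fixes a :: "nat \<Rightarrow> real"
  assumes "finite P"
  shows "(\<Sum>S\<in>Pow P. (\<Prod>p\<in>S. a p)) = (\<Prod>p\<in>P. 1 + a p)"
  using prod_add[OF assms, of a "\<lambda>_. 1"] by (simp add: add.commute)

lemma coprime_iff_pf:
  assumes "n > (0::nat)"
  shows "coprime b n \<longleftrightarrow> (\<forall>p\<in>prime_factors n. \<not> p dvd b)"
proof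
  assume c: "coprime b n"
  show "\<forall>p\<in>prime_factors n. \<not> p dvd b"
  proof (intro ballI notI)
    fix p assume p: "p \<in> prime_factors n" and "p dvd b"
    have pn: "p dvd n" and pp: "prime p" using p by (simp_all add: in_prime_factors_iff)
    have "is_unit p" by (rule coprime_common_divisor[OF c \<open>p dvd b\<close> pn])
    thus False using pp by simp
  qed
next
  assume h: "\<forall>p\<in>prime_factors n. \<not> p dvd b"
  show "coprime b n"
  proof (rule ccontr)
    assume "\<not> coprime b n"
    hence "gcd b n \<noteq> 1" using coprime_iff_gcd_eq_1 by blast
    then obtain p where pp: "prime p" and pg: "p dvd gcd b n" using prime_factor_nat by blast
    have pb: "p dvd b" using pg dvd_trans gcd_dvd1 by blast
    have pn: "p dvd n" using pg dvd_trans gcd_dvd2 by blast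
    have "p \<in> prime_factors n" using assms pp pn by (simp add: in_prime_factors_iff)
    thus False using h pb by blast
  qed
qed

lemma prod_pf_dvd:
  assumes "n > (0::nat)" "S \<subseteq> prime_factors n"
  shows "\<Prod>S dvd n"
proof -
  have "\<Prod>S dvd \<Prod>(prime_factors n)" using assms by (intro prod_dvd_prod_subset) auto
  also have "\<Prod>(prime_factors n) dvd (\<Prod>p\<in>prime_factors n. p ^ multiplicity p n)"
  proof (intro prod_dvd_prod)
    fix p assume "p \<in> prime_factors n"
    hence "multiplicity p n > 0" by (simp add: prime_factors_multiplicity)
    thus "p dvd p ^ multiplicity p n" by (simp add: dvd_power)
  qed
  also have "\<dots> = n" using assms prime_factorization_nat by simp
  finally show ?thesis .
qed

lemma gcd_prod_primes:
  assumes "finite P" "\<forall>p\<in>P. prime (p::nat)" "S \<subseteq> P" "T \<subseteq> P"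
  shows "gcd (\<Prod>S) (\<Prod>T) = \<Prod>(S \<inter> T)"
proof -
  have fS: "finite S" "finite T" using assms(1,3,4) finite_subset by blast+
  have e1: "S - S \<inter> T = S - T" "T - S \<inter> T = T - S" by blast+
  have S: "\<Prod>S = \<Prod>(S \<inter> T) * \<Prod>(S - T)"
    using prod.subset_diff[of "S \<inter> T" S id] fS unfolding e1 by (simp add: mult.commute)
  have T: "\<Prod>T = \<Prod>(S \<inter> T) * \<Prod>(T - S)"
    using prod.subset_diff[of "S \<inter> T" T id] fS unfolding e1 by (simp add: mult.commute)
  have cop: "coprime (\<Prod>(S - T)) (\<Prod>(T - S))"
  proof (intro prod_coprime_left prod_coprime_right)
    fix i j assume "i \<in> S - T" "j \<in> T - S"
    hence "i \<noteq> j" "prime i" "prime j" using assms by auto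
    thus "coprime i j" using primes_coprime by blast
  qed
  have "gcd (\<Prod>S) (\<Prod>T) = \<Prod>(S \<inter> T) * gcd (\<Prod>(S - T)) (\<Prod>(T - S))"
    unfolding S T by (simp add: gcd_mult_distrib_nat)
  thus ?thesis using cop by simp
qed

lemma telescope:
  fixes f :: "nat \<Rightarrow> real"
  shows "(\<Sum>c\<in>{1..N}. real c * (f c - f (c - 1))) = real N * f N - (\<Sum>c<N. f c)"
proof (induction N)
  case 0 then show ?case by simp
next
  case (Suc N)
  have "(\<Sum>c\<in>{1..Suc N}. real c * (f c - f (c - 1))) = (\<Sum>c\<in>{1..N}. real c * (f c - f (c - 1))) + real (Suc N) * (f (Suc N) - f N)"
    by simp
  then show ?case using Suc by (simp add: algebra_simps)
qed



lemma sum_div_real':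
  assumes "d > 0" "d dvd n"
  shows "(\<Sum>c<n. real (c div d)) = (real n ^ 2 / real d - real n) / 2"
proof -
  obtain K where n: "n = d * K" using assms by (auto elim: dvdE)
  show ?thesis unfolding n sum_div_real[OF assms(1)] using assms(1)
    by (simp add: field_simps power2_eq_square)
qed

lemma basic_P:
  assumes "n > (1::nat)"
  shows "finite (prime_factors n)" "\<forall>p\<in>prime_factors n. prime p" "prime_factors n \<noteq> {}"
    "\<And>S. S \<in> Pow (prime_factors n) \<Longrightarrow> \<Prod>S > 0"
    "\<And>S. S \<in> Pow (prime_factors n) \<Longrightarrow> \<Prod>S dvd n"
proof -
  show "finite (prime_factors n)" by simp
  show "\<forall>p\<in>prime_factors n. prime p" by auto
  obtain p where "prime p" "p dvd n" using prime_factor_nat[of n] assms by auto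
  hence "p \<in> prime_factors n" using assms by (simp add: in_prime_factors_iff)
  thus "prime_factors n \<noteq> {}" by blast
  fix S assume S: "S \<in> Pow (prime_factors n)"
  hence "finite S" "\<forall>p\<in>S. prime p" using finite_subset by auto
  thus "\<Prod>S > 0" by (simp add: prime_gt_0_nat prod_pos)
  show "\<Prod>S dvd n" using S assms by (intro prod_pf_dvd) auto
qed

lemma prod_neg_inv:
  assumes "finite S" "\<forall>p\<in>S. prime (p::nat)"
  shows "(\<Prod>p\<in>S. - 1 / real p) = (-1)^card S / real (\<Prod>S)"
    "(\<Prod>p\<in>S. - real p) = (-1)^card S * real (\<Prod>S)"
    "(\<Prod>p\<in>S. - 1 :: real) = (-1)^card S"
proof -
  show "(\<Prod>p\<in>S. - 1 / real p) = (-1)^card S / real (\<Prod>S)"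
    using assms(1) by (induction S rule: finite_induct) (simp_all add: field_simps)
  have "(\<Prod>p\<in>S. - real p) = (\<Prod>p\<in>S. (-1) * real p)" by simp
  also have "\<dots> = (-1)^card S * real (\<Prod>S)" by (simp only: prod.distrib) simp
  finally show "(\<Prod>p\<in>S. - real p) = (-1)^card S * real (\<Prod>S)" .
  show "(\<Prod>p\<in>S. - 1 :: real) = (-1)^card S" by simp
qed

lemma Lambda_formula:
  assumes "n > (1::nat)"
  shows "(\<Sum>c<n. \<Sum>S\<in>Pow (prime_factors n). (-1)^card S * real (c div \<Prod>S))
          = real n * real (totient n) / 2"
proof -
  define P where "P = prime_factors n"
  note bP = basic_P[OF assms, folded P_def]
  have "(\<Sum>c<n. \<Sum>S\<in>Pow P. (-1)^card S * real (c div \<Prod>S))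
      = (\<Sum>S\<in>Pow P. (-1)^card S * (\<Sum>c<n. real (c div \<Prod>S)))"
    by (subst sum.swap) (simp add: sum_distrib_left)
  also have "\<dots> = (\<Sum>S\<in>Pow P. (real n ^ 2 / 2) * (\<Prod>p\<in>S. - 1 / real p) - (real n / 2) * (\<Prod>p\<in>S. - 1))"
  proof (intro sum.cong refl)
    fix S assume S: "S \<in> Pow P"
    have fS: "finite S" "\<forall>p\<in>S. prime p" using S bP(1,2) finite_subset by auto
    show "(-1)^card S * (\<Sum>c<n. real (c div \<Prod>S)) = (real n ^ 2 / 2) * (\<Prod>p\<in>S. - 1 / real p) - (real n / 2) * (\<Prod>p\<in>S. - 1)"
      unfolding sum_div_real'[OF bP(4)[OF S] bP(5)[OF S]] prod_neg_inv[OF fS]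
      using bP(4)[OF S] by (simp add: field_simps)
  qed
  also have "\<dots> = (real n ^ 2 / 2) * (\<Sum>S\<in>Pow P. \<Prod>p\<in>S. - 1 / real p) - (real n / 2) * (\<Sum>S\<in>Pow P. \<Prod>p\<in>S. - 1)"
    by (simp only: sum_subtractf sum_distrib_left)
  also have "\<dots> = (real n ^ 2 / 2) * (\<Prod>p\<in>P. 1 + - 1 / real p) - (real n / 2) * (\<Prod>p\<in>P. 1 + - 1)"
    unfolding pow_prod[OF bP(1)] ..
  also have "(\<Prod>p\<in>P. 1 + - 1 / real p) = (\<Prod>p\<in>P. 1 - 1 / real p)" by simp
  also have "(\<Prod>p\<in>P. 1 + - 1 :: real) = 0" using bP(1,3) by (simp add: card_gt_0_iff)
  also have "(\<Prod>p\<in>P. 1 - 1 / real p) = real (totient n) / real n"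
    using totient_formula2[of n] assms unfolding P_def by simp
  finally show ?thesis unfolding P_def using assms by (simp add: power2_eq_square)
qed


lemma Q_pointwise:
  fixes s t d e g n :: real
  assumes "d \<noteq> 0" "e \<noteq> 0"
  shows "s * t * (n * (4 * n ^ 2 - 3 * n * (d + e) - d ^ 2 - e ^ 2 + 3 * d * e + g ^ 2) / (12 * d * e))
    = n / 12 * (4 * n ^ 2 * ((s / d) * (t / e)) - 3 * n * (s * (t / e)) - 3 * n * ((s / d) * t)
        - (s * d) * (t / e) - (s / d) * (t * e) + 3 * (s * t) + (s / d) * (t / e) * g ^ 2)"
  using assms by (simp add: field_simps power2_eq_square)

lemma Q_formula:
  assumes "n > (1::nat)"
  defines "P \<equiv> prime_factors n"
  shows "(\<Sum>c<n. (\<Sum>S\<in>Pow P. (-1)^card S * real (c div \<Prod>S))^2)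
     = real n / 12 * (4 * real n ^ 2 * (\<Prod>p\<in>P. 1 - 1 / real p) ^ 2
         - 2 * (\<Prod>p\<in>P. 1 - 1 / real p) * (\<Prod>p\<in>P. 1 - real p)
         + 2 ^ card P * (\<Prod>p\<in>P. 1 - 1 / real p))"
proof -
  note bP = basic_P[OF assms(1), folded P_def]
  define x where "x S c = (-1)^card S * real (c div \<Prod>S)" for S c
  define ni where "ni p = - 1 / real p" for p :: nat
  define mo where "mo p = (- 1 :: real)" for p :: nat
  define np where "np p = - real p" for p :: nat
  define sq where "sq p = real p ^ 2" for p :: nat
  have "(\<Sum>c<n. (\<Sum>S\<in>Pow P. x S c)^2) = (\<Sum>c<n. \<Sum>S\<in>Pow P. \<Sum>T\<in>Pow P. x S c * x T c)"
    by (simp add: power2_eq_square sum_product)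
  also have "\<dots> = (\<Sum>S\<in>Pow P. \<Sum>c<n. \<Sum>T\<in>Pow P. x S c * x T c)" by (rule sum.swap)
  also have "\<dots> = (\<Sum>S\<in>Pow P. \<Sum>T\<in>Pow P. \<Sum>c<n. x S c * x T c)"
    by (intro sum.cong refl) (rule sum.swap)
  also have "\<dots> = (\<Sum>S\<in>Pow P. \<Sum>T\<in>Pow P. real n / 12 * (
        4 * real n ^ 2 * ((\<Prod>p\<in>S. ni p) * (\<Prod>p\<in>T. ni p))
      - 3 * real n * ((\<Prod>p\<in>S. mo p) * (\<Prod>p\<in>T. ni p))
      - 3 * real n * ((\<Prod>p\<in>S. ni p) * (\<Prod>p\<in>T. mo p))
      - (\<Prod>p\<in>S. np p) * (\<Prod>p\<in>T. ni p)
      - (\<Prod>p\<in>S. ni p) * (\<Prod>p\<in>T. np p)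
      + 3 * ((\<Prod>p\<in>S. mo p) * (\<Prod>p\<in>T. mo p))
      + (\<Prod>p\<in>S. ni p) * (\<Prod>p\<in>T. ni p) * (\<Prod>p\<in>S \<inter> T. sq p)))"
  proof (intro sum.cong refl)
    fix S T assume S: "S \<in> Pow P" and T: "T \<in> Pow P"
    have fS: "finite S" "\<forall>p\<in>S. prime p" using S bP(1,2) finite_subset by auto
    have fT: "finite T" "\<forall>p\<in>T. prime p" using T bP(1,2) finite_subset by auto
    have g: "gcd (\<Prod>S) (\<Prod>T) = \<Prod>(S \<inter> T)" using S T bP(1,2) by (intro gcd_prod_primes) auto
    have sqg: "(\<Prod>p\<in>S \<inter> T. sq p) = real (gcd (\<Prod>S) (\<Prod>T)) ^ 2"
      unfolding g sq_def by (simp add: prod_power_distrib)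
    have "(\<Sum>c<n. x S c * x T c) = (-1)^card S * (-1)^card T * (\<Sum>c<n. real (c div \<Prod>S) * real (c div \<Prod>T))"
      unfolding x_def by (simp add: sum_distrib_left algebra_simps)
    also have "\<dots> = (-1)^card S * (-1)^card T * (real n * (4 * real n ^ 2 - 3 * real n * (real (\<Prod>S) + real (\<Prod>T))
        - real (\<Prod>S) ^ 2 - real (\<Prod>T) ^ 2 + 3 * real (\<Prod>S) * real (\<Prod>T) + real (gcd (\<Prod>S) (\<Prod>T)) ^ 2)
        / (12 * real (\<Prod>S) * real (\<Prod>T)))"
      by (subst G_formula[OF bP(4)[OF S] bP(4)[OF T] bP(5)[OF S] bP(5)[OF T]]) (rule refl)
    also have "\<dots> = real n / 12 * (
        4 * real n ^ 2 * (((-1)^card S / real (\<Prod>S)) * ((-1)^card T / real (\<Prod>T)))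
      - 3 * real n * ((-1)^card S * ((-1)^card T / real (\<Prod>T)))
      - 3 * real n * (((-1)^card S / real (\<Prod>S)) * (-1)^card T)
      - ((-1)^card S * real (\<Prod>S)) * ((-1)^card T / real (\<Prod>T))
      - ((-1)^card S / real (\<Prod>S)) * ((-1)^card T * real (\<Prod>T))
      + 3 * ((-1)^card S * (-1)^card T)
      + ((-1)^card S / real (\<Prod>S)) * ((-1)^card T / real (\<Prod>T)) * real (gcd (\<Prod>S) (\<Prod>T)) ^ 2)"
      by (rule Q_pointwise) (use bP(4)[OF S] bP(4)[OF T] in \<open>simp_all del: of_nat_prod\<close>)
    finally show "(\<Sum>c<n. x S c * x T c) = real n / 12 * (
        4 * real n ^ 2 * ((\<Prod>p\<in>S. ni p) * (\<Prod>p\<in>T. ni p))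
      - 3 * real n * ((\<Prod>p\<in>S. mo p) * (\<Prod>p\<in>T. ni p))
      - 3 * real n * ((\<Prod>p\<in>S. ni p) * (\<Prod>p\<in>T. mo p))
      - (\<Prod>p\<in>S. np p) * (\<Prod>p\<in>T. ni p)
      - (\<Prod>p\<in>S. ni p) * (\<Prod>p\<in>T. np p)
      + 3 * ((\<Prod>p\<in>S. mo p) * (\<Prod>p\<in>T. mo p))
      + (\<Prod>p\<in>S. ni p) * (\<Prod>p\<in>T. ni p) * (\<Prod>p\<in>S \<inter> T. sq p))"
      unfolding sqg ni_def mo_def np_def prod_neg_inv[OF fS] prod_neg_inv[OF fT] .
  qed
  also have "\<dots> = real n / 12 * (
        4 * real n ^ 2 * (\<Sum>S\<in>Pow P. \<Sum>T\<in>Pow P. (\<Prod>p\<in>S. ni p) * (\<Prod>p\<in>T. ni p))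
      - 3 * real n * (\<Sum>S\<in>Pow P. \<Sum>T\<in>Pow P. (\<Prod>p\<in>S. mo p) * (\<Prod>p\<in>T. ni p))
      - 3 * real n * (\<Sum>S\<in>Pow P. \<Sum>T\<in>Pow P. (\<Prod>p\<in>S. ni p) * (\<Prod>p\<in>T. mo p))
      - (\<Sum>S\<in>Pow P. \<Sum>T\<in>Pow P. (\<Prod>p\<in>S. np p) * (\<Prod>p\<in>T. ni p))
      - (\<Sum>S\<in>Pow P. \<Sum>T\<in>Pow P. (\<Prod>p\<in>S. ni p) * (\<Prod>p\<in>T. np p))
      + 3 * (\<Sum>S\<in>Pow P. \<Sum>T\<in>Pow P. (\<Prod>p\<in>S. mo p) * (\<Prod>p\<in>T. mo p))
      + (\<Sum>S\<in>Pow P. \<Sum>T\<in>Pow P. (\<Prod>p\<in>S. ni p) * (\<Prod>p\<in>T. ni p) * (\<Prod>p\<in>S \<inter> T. sq p)))"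
    by (simp add: sum.distrib sum_subtractf sum_distrib_left right_diff_distrib distrib_left mult.assoc)
  also have "\<dots> = real n / 12 * (
        4 * real n ^ 2 * (\<Prod>p\<in>P. 1 + ni p + ni p + ni p * ni p)
      - 3 * real n * (\<Prod>p\<in>P. 1 + mo p + ni p + mo p * ni p)
      - 3 * real n * (\<Prod>p\<in>P. 1 + ni p + mo p + ni p * mo p)
      - (\<Prod>p\<in>P. 1 + np p + ni p + np p * ni p)
      - (\<Prod>p\<in>P. 1 + ni p + np p + ni p * np p)
      + 3 * (\<Prod>p\<in>P. 1 + mo p + mo p + mo p * mo p)
      + (\<Prod>p\<in>P. 1 + ni p + ni p + ni p * ni p * sq p))"
    unfolding pow_pair_prod2[OF bP(1)] pow_pair_prod[OF bP(1)] ..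
  also have "\<dots> = real n / 12 * (4 * real n ^ 2 * (\<Prod>p\<in>P. 1 - 1 / real p) ^ 2
         - 2 * (\<Prod>p\<in>P. 1 - 1 / real p) * (\<Prod>p\<in>P. 1 - real p)
         + 2 ^ card P * (\<Prod>p\<in>P. 1 - 1 / real p))"
  proof -
    have p0: "\<And>p. p \<in> P \<Longrightarrow> real p \<noteq> 0" using bP(2) prime_gt_0_nat by fastforce
    have cP: "card P > 0" using bP(1,3) by (simp add: card_gt_0_iff)
    have z1: "(\<Prod>p\<in>P. 1 + mo p + ni p + mo p * ni p) = 0" unfolding mo_def ni_def using cP by simp
    have z2: "(\<Prod>p\<in>P. 1 + ni p + mo p + ni p * mo p) = 0" unfolding mo_def ni_def using cP by simp
    have z3: "(\<Prod>p\<in>P. 1 + mo p + mo p + mo p * mo p) = 0" unfolding mo_def using cP by simp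
    have a1: "(\<Prod>p\<in>P. 1 + ni p + ni p + ni p * ni p) = (\<Prod>p\<in>P. 1 - 1 / real p) ^ 2"
      unfolding prod_power_distrib ni_def by (intro prod.cong refl) (use p0 in \<open>simp add: field_simps power2_eq_square\<close>)
    have a4: "(\<Prod>p\<in>P. 1 + np p + ni p + np p * ni p) = (\<Prod>p\<in>P. 1 - 1 / real p) * (\<Prod>p\<in>P. 1 - real p)"
      unfolding prod.distrib[symmetric] np_def ni_def
      by (intro prod.cong refl) (use p0 in \<open>simp add: field_simps\<close>)
    have a5: "(\<Prod>p\<in>P. 1 + ni p + np p + ni p * np p) = (\<Prod>p\<in>P. 1 - 1 / real p) * (\<Prod>p\<in>P. 1 - real p)"
      unfolding prod.distrib[symmetric] np_def ni_def
      by (intro prod.cong refl) (use p0 in \<open>simp add: field_simps\<close>)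
    have a7: "(\<Prod>p\<in>P. 1 + ni p + ni p + ni p * ni p * sq p) = 2 ^ card P * (\<Prod>p\<in>P. 1 - 1 / real p)"
    proof -
      have "(\<Prod>p\<in>P. 1 + ni p + ni p + ni p * ni p * sq p) = (\<Prod>p\<in>P. 2 * (1 - 1 / real p))"
        unfolding ni_def sq_def
        by (intro prod.cong refl) (use p0 in \<open>simp add: field_simps power2_eq_square\<close>)
      also have "\<dots> = (\<Prod>p\<in>P. 2) * (\<Prod>p\<in>P. 1 - 1 / real p)" by (rule prod.distrib)
      also have "\<dots> = 2 ^ card P * (\<Prod>p\<in>P. 1 - 1 / real p)" by simp
      finally show ?thesis .
    qed
    show ?thesis unfolding z1 z2 z3 a1 a4 a5 a7 by (simp add: algebra_simps)
  qed
  finally show ?thesis unfolding x_def .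
qed


lemma mobius_count:
  assumes "n > (1::nat)"
  shows "real (card {b\<in>{1..c}. coprime b n}) = (\<Sum>S\<in>Pow (prime_factors n). (-1)^card S * real (c div \<Prod>S))"
proof -
  note bP = basic_P[OF assms(1)]
  have "{b\<in>{1..c}. coprime b n} = {b\<in>{1..c}. \<forall>p\<in>prime_factors n. \<not> p dvd b}"
    using coprime_iff_pf[of n] assms by auto
  hence "int (card {b\<in>{1..c}. coprime b n}) = (\<Sum>S\<in>Pow (prime_factors n). (-1)^card S * int (c div \<Prod>S))"
    using cnt_incl_excl[OF bP(1,2)] by simp
  hence "real_of_int (int (card {b\<in>{1..c}. coprime b n})) = real_of_int (\<Sum>S\<in>Pow (prime_factors n). (-1)^card S * int (c div \<Prod>S))"
    by simp
  thus ?thesis by simp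
qed

lemma radical_facts:
  assumes "n > (1::nat)"
  shows "omega (radical n) = card (prime_factors n)"
        "real (totient (radical n)) * (-1) ^ omega (radical n) = (\<Prod>p\<in>prime_factors n. 1 - real p)"
proof -
  note bP = basic_P[OF assms(1)]
  define P where "P = prime_factors n"
  have p0: "\<And>p. p \<in> P \<Longrightarrow> p > 0" using bP(2) prime_gt_0_nat unfolding P_def by blast
  have pf: "prime_factors (radical n) = P"
  proof -
    have "prime_factors (\<Prod>p\<in>P. p) = \<Union>((prime_factors \<circ> (\<lambda>p. p)) ` P)"
      using bP(1) p0 unfolding P_def by (intro prime_factors_prod) auto
    also have "\<dots> = P" using bP(2) unfolding P_def by (auto simp: prime_prime_factors)
    finally show ?thesis unfolding radical_def P_def .
  qed
  show o: "omega (radical n) = card (prime_factors n)" unfolding omega_def pf P_def ..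
  have "real (totient (radical n)) = real (radical n) * (\<Prod>p\<in>P. 1 - 1 / real p)"
    using totient_formula2[of "radical n"] unfolding pf .
  also have "real (radical n) = (\<Prod>p\<in>P. real p)" unfolding radical_def P_def by simp
  finally have "real (totient (radical n)) * (-1) ^ omega (radical n) = (\<Prod>p\<in>P. real p) * (\<Prod>p\<in>P. 1 - 1 / real p) * (\<Prod>p\<in>P. -1)"
    unfolding o P_def by simp
  also have "\<dots> = (\<Prod>p\<in>P. real p * (1 - 1 / real p) * -1)" by (simp only: prod.distrib)
  also have "\<dots> = (\<Prod>p\<in>P. 1 - real p)"
    by (intro prod.cong refl) (use p0 in \<open>force simp: field_simps\<close>)
  finally show "real (totient (radical n)) * (-1) ^ omega (radical n) = (\<Prod>p\<in>prime_factors n. 1 - real p)"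
    unfolding P_def .
qed


lemma final_alg:
  fixes nn X Pm Z :: real
  shows "(nn * ((nn * X) ^ 2 + nn * X) - (nn / 12 * (4 * nn ^ 2 * X ^ 2 - 2 * X * Pm + Z * X) + nn * (nn * X) / 2)) / 2
       = nn * X / 24 * (8 * nn * (nn * X) + 6 * nn + 2 * Pm - Z)"
  by (simp add: field_simps power2_eq_square)

theorem theorem1:
  fixes n :: nat
  assumes "n > 1"
  defines "m \<equiv> radical n"
  defines "a \<equiv> (\<lambda>j. totatives_sorted n ! (j - 1))"
  shows "real (\<Sum>j=1..totient n. j * a j) =
    real (totient n) / 24 *
      (8 * real n * real (totient n) + 6 * real n
       + 2 * real (totient m) * (-1) ^ omega m - 2 ^ omega m)"
proof -
  define P where "P = prime_factors n"
  define T where "T = {a. 0 < a \<and> a < n \<and> coprime a n}"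
  define xs where "xs = totatives_sorted n"
  define Lc where "Lc c = card {b\<in>{1..c}. coprime b n}" for c
  define F where "F c = real (Lc c) ^ 2 + real (Lc c)" for c
  have n0: "n > 0" using assms by simp
  have finT: "finite T" unfolding T_def by simp
  have Ttot: "T = totatives n"
  proof -
    have "\<not> coprime n n" using assms by simp
    thus ?thesis unfolding T_def totatives_def using le_neq_implies_less by fastforce
  qed
  have cardT: "card T = totient n" unfolding Ttot totient_def ..
  have setxs: "set xs = T" unfolding xs_def totatives_sorted_def T_def[symmetric] using finT by simp
  have dxs: "distinct xs" unfolding xs_def totatives_sorted_def by simp
  have sxs: "sorted_wrt (<) xs" unfolding xs_def totatives_sorted_def by (rule strict_sorted_list_of_set)
  have lxs: "length xs = totient n" using dxs setxs cardT distinct_card by fastforce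
  have Lc_nth: "Lc (xs ! i) = Suc i" if i: "i < length xs" for i
  proof -
    have "{b\<in>{1..xs ! i}. coprime b n} = (\<lambda>k. xs ! k) ` {..i}"
    proof (intro equalityI subsetI)
      fix b assume b: "b \<in> {b\<in>{1..xs ! i}. coprime b n}"
      have "xs ! i \<in> T" using i setxs nth_mem by blast
      hence "b \<in> T" using b unfolding T_def by auto
      then obtain k where k: "k < length xs" "b = xs ! k" using setxs in_set_conv_nth by metis
      have "k \<le> i"
      proof (rule ccontr)
        assume "\<not> k \<le> i"
        hence "xs ! i < xs ! k" using sorted_wrt_nth_less[OF sxs _ k(1)] by simp
        thus False using b k by auto
      qed
      thus "b \<in> (\<lambda>k. xs ! k) ` {..i}" using k by auto
    next
      fix b assume "b \<in> (\<lambda>k. xs ! k) ` {..i}"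
      then obtain k where k: "k \<le> i" "b = xs ! k" by auto
      have "b \<in> T" using k i setxs nth_mem by (metis le_less_trans)
      moreover have "b \<le> xs ! i"
        using k sorted_wrt_nth_less[OF sxs _ i] by (cases "k = i") (auto simp: less_imp_le)
      ultimately show "b \<in> {b\<in>{1..xs ! i}. coprime b n}" unfolding T_def by auto
    qed
    moreover have "inj_on (\<lambda>k. xs ! k) {..i}"
      using dxs i by (intro inj_on_nth) auto
    ultimately show ?thesis unfolding Lc_def by (simp add: card_image)
  qed
  have step1: "(\<Sum>j=1..totient n. j * a j) = (\<Sum>i<totient n. Suc i * xs ! i)"
    unfolding One_nat_def sum.atLeast1_atMost_eq a_def xs_def by simp
  have step2: "(\<Sum>i<totient n. Suc i * xs ! i) = (\<Sum>b\<in>T. Lc b * b)"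
  proof -
    have "(\<Sum>i<totient n. Suc i * xs ! i) = (\<Sum>i<length xs. Lc (xs ! i) * xs ! i)"
      using lxs Lc_nth by (intro sum.cong) auto
    also have "\<dots> = sum (\<lambda>b. Lc b * b) ((\<lambda>i. xs ! i) ` {..<length xs})"
      by (subst sum.reindex) (use dxs in \<open>auto intro: inj_on_nth\<close>)
    also have "(\<lambda>i. xs ! i) ` {..<length xs} = T" using setxs by (auto simp: in_set_conv_nth)
    finally show ?thesis .
  qed
  have Lstep: "real (Lc c) = real (Lc (c - 1)) + (if coprime c n then 1 else 0)" if c: "c \<ge> 1" for c
  proof (cases "coprime c n")
    case True
    have e: "{b\<in>{1..c}. coprime b n} = insert c {b\<in>{1..c-1}. coprime b n}"
    proof (intro equalityI subsetI)
      fix b assume b: "b \<in> {b\<in>{1..c}. coprime b n}"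
      hence "b = c \<or> b \<le> c - 1" by auto
      thus "b \<in> insert c {b\<in>{1..c-1}. coprime b n}" using b by auto
    qed (use c True in auto)
    have "c \<notin> {b\<in>{1..c-1}. coprime b n}" using c by auto
    hence "card (insert c {b\<in>{1..c-1}. coprime b n}) = Suc (card {b\<in>{1..c-1}. coprime b n})"
      by (intro card_insert_disjoint) simp_all
    thus ?thesis unfolding Lc_def e using True by simp
  next
    case False
    have e: "{b\<in>{1..c}. coprime b n} = {b\<in>{1..c-1}. coprime b n}"
    proof (intro equalityI subsetI)
      fix b assume b: "b \<in> {b\<in>{1..c}. coprime b n}"
      hence "b \<noteq> c" using False by auto
      hence "b \<le> c - 1" using b by auto
      thus "b \<in> {b\<in>{1..c-1}. coprime b n}" using b by auto
    qed auto
    show ?thesis unfolding Lc_def e using False by simp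
  qed
  have Tfil: "T = {c\<in>{1..n-1}. coprime c n}"
  proof -
    have "\<And>c. (0 < c \<and> c < n) = (c \<in> {1..n-1})" using n0 by auto
    thus ?thesis unfolding T_def by blast
  qed
  have step3: "real (\<Sum>b\<in>T. Lc b * b) = (\<Sum>c\<in>{1..n-1}. real c * (F c - F (c - 1))) / 2"
  proof -
    have "real (\<Sum>b\<in>T. Lc b * b) = (\<Sum>b\<in>T. real (Lc b) * real b)" by simp
    also have "\<dots> = (\<Sum>c\<in>{1..n-1}. if coprime c n then real (Lc c) * real c else 0)"
      unfolding Tfil by (rule sum.inter_filter) simp
    also have "\<dots> = (\<Sum>c\<in>{1..n-1}. real c * (F c - F (c - 1)) / 2)"
    proof (intro sum.cong refl)
      fix c assume "c \<in> {1..n-1}"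
      hence "c \<ge> 1" by simp
      from Lstep[OF this] show "(if coprime c n then real (Lc c) * real c else 0) = real c * (F c - F (c - 1)) / 2"
        unfolding F_def by (auto simp: algebra_simps power2_eq_square)
    qed
    finally show ?thesis by (simp add: sum_divide_distrib)
  qed
  have LcT: "Lc (n - 1) = totient n"
  proof -
    have "{b\<in>{1..n-1}. coprime b n} = T" unfolding Tfil ..
    thus ?thesis unfolding Lc_def using cardT by simp
  qed
  have step4: "(\<Sum>c\<in>{1..n-1}. real c * (F c - F (c - 1))) = real n * F (n - 1) - (\<Sum>c<n. F c)"
  proof -
    have nn: "n = Suc (n - 1)" using n0 by simp
    have "(\<Sum>c<n. F c) = (\<Sum>c<n-1. F c) + F (n - 1)" by (metis nn sum.lessThan_Suc)
    moreover have "real (n - 1) = real n - 1" using n0 by simp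
    ultimately show ?thesis unfolding telescope by (simp add: algebra_simps)
  qed
  have mob: "real (Lc c) = (\<Sum>S\<in>Pow P. (-1)^card S * real (c div \<Prod>S))" for c
    unfolding Lc_def P_def by (rule mobius_count[OF assms(1)])
  have sumF: "(\<Sum>c<n. F c) = real n / 12 * (4 * real n ^ 2 * (\<Prod>p\<in>P. 1 - 1 / real p) ^ 2
         - 2 * (\<Prod>p\<in>P. 1 - 1 / real p) * (\<Prod>p\<in>P. 1 - real p)
         + 2 ^ card P * (\<Prod>p\<in>P. 1 - 1 / real p)) + real n * real (totient n) / 2"
    unfolding F_def sum.distrib mob P_def Q_formula[OF assms(1)] Lambda_formula[OF assms(1)] ..
  have W: "real (totient n) = real n * (\<Prod>p\<in>P. 1 - 1 / real p)"
    unfolding P_def by (rule totient_formula2)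
  have rad: "omega m = card P" "real (totient m) * (-1) ^ omega m = (\<Prod>p\<in>P. 1 - real p)"
    using radical_facts[OF assms(1)] unfolding m_def P_def by auto
  have "real (\<Sum>j=1..totient n. j * a j) = (real n * F (n - 1) - (\<Sum>c<n. F c)) / 2"
    unfolding step1 step2 step3 step4 ..
  also have "\<dots> = real (totient n) / 24 *
      (8 * real n * real (totient n) + 6 * real n
       + 2 * (real (totient m) * (-1) ^ omega m) - 2 ^ omega m)"
  proof -
    have rad2': "real (totient m) * (-1) ^ card P = (\<Prod>p\<in>P. 1 - real p)" using rad by simp
    define X where "X = (\<Prod>p\<in>P. 1 - 1 / real p)"
    define Pm where "Pm = (\<Prod>p\<in>P. 1 - real p)"
    define Z :: real where "Z = 2 ^ card P"
    have W': "real (totient n) = real n * X" unfolding X_def by (rule W)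
    have F1: "F (n - 1) = (real n * X) ^ 2 + real n * X" unfolding F_def LcT W' ..
    have sF: "(\<Sum>c<n. F c) = real n / 12 * (4 * real n ^ 2 * X ^ 2 - 2 * X * Pm + Z * X) + real n * (real n * X) / 2"
      unfolding sumF X_def Pm_def Z_def W' by simp
    have "(real n * F (n - 1) - (\<Sum>c<n. F c)) / 2
       = (real n * ((real n * X) ^ 2 + real n * X) - (real n / 12 * (4 * real n ^ 2 * X ^ 2 - 2 * X * Pm + Z * X) + real n * (real n * X) / 2)) / 2"
      unfolding F1 sF ..
    also have "\<dots> = real n * X / 24 * (8 * real n * (real n * X) + 6 * real n + 2 * Pm - Z)"
      by (rule final_alg)
    also have "\<dots> = real (totient n) / 24 *
      (8 * real n * real (totient n) + 6 * real n
       + 2 * (real (totient m) * (-1) ^ omega m) - 2 ^ omega m)"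
      unfolding W' rad(1) rad2' Pm_def Z_def ..
    finally show ?thesis .
  qed
  finally show ?thesis by (simp add: mult.assoc)
qed


end
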